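(* Fix $p\in(2,\infty)$, $\alpha\in(0,1)$, $m,n\in\mathbb N$ and $k\in\{1,\ldots,n\}$. Suppose that every $f:\mathbb Z_{2m}^n\to\mathbb R$ satisfies $$\frac{\alpha^p}{\binom nk}\sum_{\substack{S\subset\{1,\ldots,n\}\\|S|=k}}\frac{\mathbb E\big[|f(x+m\varepsilon_S)-f(x)|^p\big]}{m^p}\le \frac kn\sum_{j=1}^n\mathbb E\big[|f(x+e_j)-f(x)|^p\big]+\Big(\frac kn\Big)^{p/2}\mathbb E\big[|f(x+\varepsilon)-f(x)|^p\big],$$ where the expectations are with respect to $(x,\varepsilon)\in\mathbb Z_{2m}^n\times\{-1,1\}^n$ chosen uniformly at random. Then $$k\ge\Big(\frac5\alpha\Big)^{\frac{2p}{p-2}}\implies m\ge\frac\alpha3\sqrt{\frac nk}.$$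
   Context: $\mathbb Z_M^n=(\mathbb Z/M\mathbb Z)^n$, with integer vectors added modulo $M$ coordinatewise. $e_1,\ldots,e_n$ is the standard basis of $\mathbb R^n$, and for $S\subset\{1,\ldots,n\}$ and $\varepsilon\in\{-1,1\}^n$, $\varepsilon_S=\sum_{j\in S}\varepsilon_je_j$. *)

theory Defs
  imports "HOL-Analysis.Analysis"
begin

text \<open>Points of Z_{2m}^n: functions on the index set {0..<n} (coordinates 1..n shifted
  to 0..n-1) with values in the residues {0..<2m}.\<close>
definition torus :: "nat \<Rightarrow> nat \<Rightarrow> (nat \<Rightarrow> int) set" where
  "torus n m = PiE {..<n} (\<lambda>_. {0..<2 * int m})"

definition signs :: "nat \<Rightarrow> (nat \<Rightarrow> int) set" where
  "signs n = PiE {..<n} (\<lambda>_. {-1, 1})"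

definition addm :: "nat \<Rightarrow> nat \<Rightarrow> (nat \<Rightarrow> int) \<Rightarrow> (nat \<Rightarrow> int) \<Rightarrow> (nat \<Rightarrow> int)" where
  "addm n m x y = (\<lambda>i. if i < n then (x i + y i) mod (2 * int m) else undefined)"

definition basisv :: "nat \<Rightarrow> (nat \<Rightarrow> int)" where
  "basisv j = (\<lambda>i. if i = j then 1 else 0)"

definition epsS :: "nat set \<Rightarrow> (nat \<Rightarrow> int) \<Rightarrow> (nat \<Rightarrow> int)" where
  "epsS S e = (\<lambda>i. if i \<in> S then e i else 0)"

definition Exp :: "nat \<Rightarrow> nat \<Rightarrow> ((nat \<Rightarrow> int) \<Rightarrow> (nat \<Rightarrow> int) \<Rightarrow> real) \<Rightarrow> real" where
  "Exp n m F = (\<Sum>(x, e) \<in> torus n m \<times> signs n. F x e) / real (card (torus n m \<times> signs n))"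

end

theory Submission
  imports Defs
begin

definition Wf :: "nat \<Rightarrow> int \<Rightarrow> real" where
  "Wf m t = (let r = t mod (2 * int m) in
     if r < int m then real_of_int r - real m / 2 else 3 * real m / 2 - real_of_int r)"

lemma W_mod: "Wf m (t mod (2 * int m)) = Wf m t"
  by (simp add: Wf_def)

lemma W_anti: assumes "m \<ge> 1" shows "Wf m (t + int m) = - Wf m t"
proof -
  define r where "r = t mod (2 * int m)"
  have r: "0 \<le> r" "r < 2 * int m" using assms by (auto simp: r_def)
  have e: "(t + int m) mod (2 * int m) = (r + int m) mod (2 * int m)"
    by (metis mod_add_left_eq r_def)
  show ?thesis
  proof (cases "r < int m")
    case True
    have "(r + int m) mod (2 * int m) = r + int m" using r True by (intro mod_pos_pos_trivial) auto
    then show ?thesis using True r unfolding Wf_def Let_def e r_def[symmetric] by auto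
  next
    case False
    have "(r + int m) mod (2 * int m) = ((r - int m) + 2 * int m) mod (2 * int m)" by (simp add: algebra_simps)
    also have "\<dots> = r - int m" using r False by (subst mod_add_self2) (intro mod_pos_pos_trivial, auto)
    finally show ?thesis using False r unfolding Wf_def Let_def e r_def[symmetric] by auto
  qed
qed

lemma W_anti': assumes "m \<ge> 1" shows "Wf m (t - int m) = - Wf m t"
  using W_anti[OF assms, of "t - int m"] by simp

lemma W_lip: assumes "m \<ge> 1" shows "\<bar>Wf m (t + 1) - Wf m t\<bar> \<le> 1"
proof -
  define r where "r = t mod (2 * int m)"
  have r: "0 \<le> r" "r < 2 * int m" using assms by (auto simp: r_def)
  have e: "(t + 1) mod (2 * int m) = (r + 1) mod (2 * int m)"
    by (metis mod_add_left_eq r_def)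
  show ?thesis
  proof (cases "r + 1 < 2 * int m")
    case True
    have "(r + 1) mod (2 * int m) = r + 1" using r True by (intro mod_pos_pos_trivial) auto
    then show ?thesis using True r unfolding Wf_def Let_def e r_def[symmetric] by auto
  next
    case False
    then have "r + 1 = 2 * int m" using r by auto
    then have "(r + 1) mod (2 * int m) = 0" by simp
    then show ?thesis using False r unfolding Wf_def Let_def e r_def[symmetric] by auto
  qed
qed

lemma W_bound: assumes "m \<ge> 1" shows "\<bar>Wf m t\<bar> \<le> real m / 2"
proof -
  define r where "r = t mod (2 * int m)"
  have r: "0 \<le> r" "r < 2 * int m" using assms by (auto simp: r_def)
  have "real_of_int r \<ge> 0" "real_of_int r < 2 * real m" using r by linarith+
  moreover have "r < int m \<Longrightarrow> real_of_int r < real m" by linarith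
  moreover have "\<not> r < int m \<Longrightarrow> real_of_int r \<ge> real m" by linarith
  ultimately show ?thesis unfolding Wf_def Let_def r_def[symmetric] by (auto simp: abs_if)
qed

lemma sum_split2m:
  fixes h :: "int \<Rightarrow> 'a::comm_monoid_add"
  shows "(\<Sum>t\<in>{0..<2 * int m}. h t) = (\<Sum>t\<in>{0..<int m}. h t + h (t + int m))"
proof -
  have "{0..<2 * int m} = {0..<int m} \<union> {int m..<2 * int m}" by auto
  then have "(\<Sum>t\<in>{0..<2 * int m}. h t) = (\<Sum>t\<in>{0..<int m}. h t) + (\<Sum>t\<in>{int m..<2 * int m}. h t)"
    by (simp add: sum.union_disjoint)
  also have "(\<Sum>t\<in>{int m..<2 * int m}. h t) = (\<Sum>t\<in>{0..<int m}. h (t + int m))"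
    by (rule sum.reindex_bij_witness[of _ "\<lambda>t. t + int m" "\<lambda>t. t - int m"]) auto
  finally show ?thesis by (simp add: sum.distrib)
qed

lemma W_sin_sum: assumes "m \<ge> 1" shows "(\<Sum>t\<in>{0..<2 * int m}. sin (c * Wf m t)) = 0"
  by (simp add: sum_split2m W_anti[OF assms])

lemma sum_int_nat: "(\<Sum>t\<in>{0..<int m}. h t) = (\<Sum>t<m. h (int t))"
  by (rule sum.reindex_bij_witness[of _ "int" "nat"]) auto

lemma sq_sum_formula: "(\<Sum>t<N. (real t - c)^2) = real N^3/3 - real N^2/2 + real N/6 - c*(real N^2 - real N) + real N*c^2"
proof (induction N)
  case 0 then show ?case by simp
next
  case (Suc N)
  have "(\<Sum>t<Suc N. (real t - c)^2) = (\<Sum>t<N. (real t - c)^2) + (real N - c)^2" by simp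
  also have "\<dots> = real N^3/3 - real N^2/2 + real N/6 - c*(real N^2 - real N) + real N*c^2 + (real N - c)^2"
    by (simp only: Suc.IH)
  also have "\<dots> = real (Suc N)^3/3 - real (Suc N)^2/2 + real (Suc N)/6 - c*(real (Suc N)^2 - real (Suc N)) + real (Suc N)*c^2"
    by (simp add: power2_eq_square power3_eq_cube field_simps)
  finally show ?case .
qed

lemma W_sq_sum: assumes "m \<ge> 1" shows "(\<Sum>t\<in>{0..<2 * int m}. (Wf m t)^2) \<ge> real m ^ 3 / 6"
proof -
  have "(\<Sum>t\<in>{0..<2 * int m}. (Wf m t)^2) = (\<Sum>t\<in>{0..<int m}. 2 * (Wf m t)^2)"
    by (simp add: sum_split2m W_anti[OF assms])
  also have "\<dots> = (\<Sum>t<m. 2 * (real t - real m / 2)^2)"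
    unfolding sum_int_nat by (intro sum.cong) (auto simp: Wf_def)
  also have "\<dots> = 2 * (\<Sum>t<m. (real t - real m / 2)^2)"
    by (simp add: sum_distrib_left)
  also have "\<dots> = 2 * (real m ^3 / 12 + real m / 6)"
    unfolding sq_sum_formula by (simp add: power2_eq_square power3_eq_cube algebra_simps)
  finally show ?thesis by simp
qed

lemma cis_sum: "finite A \<Longrightarrow> cis (\<Sum>i\<in>A. f i) = (\<Prod>i\<in>A. cis (f i))"
  by (induction A rule: finite_induct) (auto simp: cis_mult[symmetric])

lemma torus_prod:
  fixes h :: "nat \<Rightarrow> int \<Rightarrow> 'c::comm_semiring_1"
  shows "(\<Sum>x\<in>torus n m. \<Prod>i<n. h i (x i)) = (\<Prod>i<n. \<Sum>t\<in>{0..<2 * int m}. h i t)"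
  unfolding torus_def by (rule prod_sum_PiE[symmetric]) auto

lemma torus_cis:
  "(\<Sum>x\<in>torus n m. cis (\<Sum>i<n. h i (x i))) = (\<Prod>i<n. \<Sum>t\<in>{0..<2 * int m}. cis (h i t))"
  unfolding cis_sum[OF finite_lessThan] by (rule torus_prod)

definition psi :: "nat \<Rightarrow> real \<Rightarrow> real" where
  "psi m c = (\<Sum>t\<in>{0..<2 * int m}. cos (c * Wf m t)) / (2 * real m)"

lemma cis_sum_W: assumes "m \<ge> 1"
  shows "(\<Sum>t\<in>{0..<2 * int m}. cis (c * Wf m t)) = complex_of_real (\<Sum>t\<in>{0..<2 * int m}. cos (c * Wf m t))"
  by (rule complex_eqI) (simp_all add: Re_sum Im_sum W_sin_sum[OF assms])

lemma torus_cos_prod: assumes "m \<ge> 1"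
  shows "(\<Sum>x\<in>torus n m. cos (\<Sum>i<n. \<tau> i * Wf m (x i))) = (2 * real m) ^ n * (\<Prod>i<n. psi m (\<tau> i))"
proof -
  have "(\<Sum>x\<in>torus n m. cos (\<Sum>i<n. \<tau> i * Wf m (x i))) = Re (\<Sum>x\<in>torus n m. cis (\<Sum>i<n. \<tau> i * Wf m (x i)))"
    by (simp add: Re_sum)
  also have "\<dots> = Re (\<Prod>i<n. complex_of_real (\<Sum>t\<in>{0..<2 * int m}. cos (\<tau> i * Wf m t)))"
    by (subst torus_cis) (simp only: cis_sum_W[OF assms])
  also have "\<dots> = (\<Prod>i<n. (\<Sum>t\<in>{0..<2 * int m}. cos (\<tau> i * Wf m t)))"
    by (simp only: of_real_prod[symmetric] Re_complex_of_real)
  also have "\<dots> = (\<Prod>i<n. 2 * real m * psi m (\<tau> i))"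
    using assms by (intro prod.cong) (auto simp: psi_def)
  also have "\<dots> = (2 * real m) ^ n * (\<Prod>i<n. psi m (\<tau> i))"
    by (simp add: prod.distrib)
  finally show ?thesis .
qed

lemma torus_cos_abs:
  "\<bar>\<Sum>x\<in>torus n m. cos (\<Sum>i<n. h i (x i))\<bar> \<le> (\<Prod>i<n. norm (\<Sum>t\<in>{0..<2 * int m}. cis (h i t)))"
proof -
  have "(\<Sum>x\<in>torus n m. cos (\<Sum>i<n. h i (x i))) = Re (\<Sum>x\<in>torus n m. cis (\<Sum>i<n. h i (x i)))"
    by (simp add: Re_sum)
  also have "\<dots> = Re (\<Prod>i<n. \<Sum>t\<in>{0..<2 * int m}. cis (h i t))"
    by (simp add: torus_cis)
  finally have "\<bar>\<Sum>x\<in>torus n m. cos (\<Sum>i<n. h i (x i))\<bar> \<le> norm (\<Prod>i<n. \<Sum>t\<in>{0..<2 * int m}. cis (h i t))"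
    using abs_Re_le_cmod by simp
  also have "\<dots> = (\<Prod>i<n. norm (\<Sum>t\<in>{0..<2 * int m}. cis (h i t)))"
    by (simp add: prod_norm)
  finally show ?thesis .
qed

lemma card_torus: "card (torus n m) = (2 * m) ^ n"
  unfolding torus_def by (simp add: card_PiE nat_mult_distrib power_mult_distrib)

lemma finite_torus: "finite (torus n m)"
  unfolding torus_def by (auto intro!: finite_PiE)

lemma card_signs: "card (signs n) = 2 ^ n"
  unfolding signs_def by (simp add: card_PiE numeral_2_eq_2)

lemma finite_signs: "finite (signs n)"
  unfolding signs_def by (auto intro!: finite_PiE)

lemma sin_lower: "\<bar>sin (x::real)\<bar> \<ge> \<bar>x\<bar> - \<bar>x\<bar>^3 / 6"
proof -
  have "\<bar>sin x - (\<Sum>m<3. sin_coeff m * x ^ m)\<bar> \<le> inverse (fact 3) * \<bar>x\<bar> ^ 3"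
    by (rule Maclaurin_sin_bound)
  moreover have "(\<Sum>m<3. sin_coeff m * x ^ m) = x"
    by (simp add: eval_nat_numeral sin_coeff_def)
  moreover have "inverse (fact 3 :: real) = 1/6" by (simp add: eval_nat_numeral)
  ultimately have "\<bar>sin x - x\<bar> \<le> \<bar>x\<bar>^3 / 6" by simp
  then show ?thesis by linarith
qed

lemma cos_upper: assumes "\<bar>x::real\<bar> \<le> 4/5" shows "cos x \<le> 1 - 9/20 * x^2"
proof -
  define y where "y = \<bar>x\<bar> / 2"
  have y: "0 \<le> y" "y \<le> 2/5" using assms by (auto simp: y_def)
  have c: "cos x = 1 - 2 * sin (x/2) ^ 2" using cos_double_sin[of "x/2"] by simp
  have s1: "\<bar>sin (x/2)\<bar> \<ge> y - y^3/6" using sin_lower[of "x/2"] by (simp add: y_def)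
  have y3: "y^3 \<le> y * (4/25)"
  proof -
    have "y^2 \<le> (2/5)^2" using y by (intro power_mono) auto
    then have "y * y^2 \<le> y * (4/25)" using y by (intro mult_left_mono) (auto simp: power2_eq_square)
    then show ?thesis by (simp add: power3_eq_cube power2_eq_square)
  qed
  have a: "y - y^3/6 \<ge> y * (73/75)" using y3 by simp
  have "sin (x/2)^2 = \<bar>sin (x/2)\<bar>^2" by simp
  also have "\<dots> \<ge> (y * (73/75))^2"
    using a s1 y by (intro power_mono) auto
  finally have "sin (x/2)^2 \<ge> y^2 * (5329/5625)" by (simp add: power_mult_distrib power2_eq_square)
  moreover have "y^2 = x^2/4" by (simp add: y_def power_divide)
  ultimately have "sin (x/2)^2 \<ge> x^2 * (5329/22500)" by simp
  then have "sin (x/2)^2 \<ge> x^2 * (9/40)" using zero_le_power2[of x] by linarith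
  then show ?thesis using c by simp
qed

lemma cos_nonneg_small: assumes "\<bar>x::real\<bar> \<le> 4/5" shows "cos x \<ge> 0"
  using assms pi_gt3 by (intro cos_ge_zero) auto

lemma psi_0: "m \<ge> 1 \<Longrightarrow> psi m 0 = 1"
  by (simp add: psi_def)

lemma psi_neg: "psi m (- c) = psi m c"
  by (simp add: psi_def)

lemma psi_nonneg: assumes "m \<ge> 1" "\<bar>c\<bar> * real m \<le> 8/5" shows "psi m c \<ge> 0"
proof -
  have "cos (c * Wf m t) \<ge> 0" for t
  proof (rule cos_nonneg_small)
    have "\<bar>c * Wf m t\<bar> = \<bar>c\<bar> * \<bar>Wf m t\<bar>" by (simp add: abs_mult)
    also have "\<dots> \<le> \<bar>c\<bar> * (real m / 2)" by (intro mult_left_mono W_bound assms) auto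
    finally show "\<bar>c * Wf m t\<bar> \<le> 4/5" using assms by simp
  qed
  then show ?thesis unfolding psi_def by (intro divide_nonneg_nonneg sum_nonneg) auto
qed

lemma psi_upper: assumes "m \<ge> 1" "\<bar>c\<bar> * real m \<le> 8/5" shows "psi m c \<le> 1 - 3/80 * c^2 * real m ^ 2"
proof -
  have "cos (c * Wf m t) \<le> 1 - 9/20 * (c^2 * (Wf m t)^2)" for t
  proof -
    have "\<bar>c * Wf m t\<bar> = \<bar>c\<bar> * \<bar>Wf m t\<bar>" by (simp add: abs_mult)
    also have "\<dots> \<le> \<bar>c\<bar> * (real m / 2)" by (intro mult_left_mono W_bound assms) auto
    finally have "\<bar>c * Wf m t\<bar> \<le> 4/5" using assms by simp
    from cos_upper[OF this] show ?thesis by (simp add: power_mult_distrib)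
  qed
  then have "(\<Sum>t\<in>{0..<2 * int m}. cos (c * Wf m t)) \<le> (\<Sum>t\<in>{0..<2 * int m}. 1 - 9/20 * (c^2 * (Wf m t)^2))"
    by (intro sum_mono) auto
  also have "\<dots> = 2 * real m - 9/20 * c^2 * (\<Sum>t\<in>{0..<2 * int m}. (Wf m t)^2)"
    by (simp add: sum_subtractf sum_distrib_left mult.assoc)
  also have "\<dots> \<le> 2 * real m - 9/20 * c^2 * (real m ^ 3 / 6)"
    using W_sq_sum[OF assms(1)] by (intro diff_left_mono mult_left_mono) auto
  finally show ?thesis using assms(1) unfolding psi_def
    by (simp add: divide_simps power3_eq_cube power2_eq_square) (simp add: algebra_simps)
qed

lemma norm_cis_W: assumes "m \<ge> 1" "\<bar>c\<bar> * real m \<le> 8/5"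
  shows "norm (\<Sum>t\<in>{0..<2 * int m}. cis (c * Wf m t)) = 2 * real m * psi m c"
proof -
  have "norm (\<Sum>t\<in>{0..<2 * int m}. cis (c * Wf m t)) = \<bar>\<Sum>t\<in>{0..<2 * int m}. cos (c * Wf m t)\<bar>"
    by (simp only: cis_sum_W[OF assms(1)] norm_of_real)
  also have "\<dots> = 2 * real m * psi m c" using psi_nonneg[OF assms] assms(1) by (simp add: psi_def zero_le_divide_iff)
  finally show ?thesis .
qed

lemma norm_cis_le: "norm (\<Sum>t\<in>{0..<2 * int m}. cis (h t)) \<le> 2 * real m"
proof -
  have "norm (\<Sum>t\<in>{0..<2 * int m}. cis (h t)) \<le> (\<Sum>t\<in>{0..<2 * int m}. norm (cis (h t)))"
    by (rule norm_sum)
  also have "\<dots> = 2 * real m" by simp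
  finally show ?thesis .
qed

lemma powr_tangent:
  fixes y M q :: real
  assumes "0 \<le> y" "0 < M" "1 \<le> q"
  shows "y powr q \<ge> M powr q + q * M powr (q - 1) * (y - M)"
proof (cases "y = 0")
  case True
  have h: "M powr (q - 1) * M = M powr q" using assms by (simp add: powr_diff field_simps)
  have "q * M powr (q - 1) * (y - M) = - (q * (M powr (q - 1) * M))" using True by (simp add: algebra_simps)
  also have "\<dots> = - q * M powr q" by (simp only: h)
  finally have e: "q * M powr (q - 1) * (y - M) = - q * M powr q" .
  have "1 * M powr q \<le> q * M powr q" using assms by (intro mult_right_mono) auto
  moreover have "y powr q = 0" using True by simp
  ultimately show ?thesis unfolding e by linarith
next
  case False
  then have "y > 0" using assms by auto
  have "q * M powr (q - 1) * (y - M) \<le> y powr q - M powr q"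
    using assms \<open>y > 0\<close>
    by (intro convex_on_imp_above_tangent[where A = "{0<..}"] powr_convex has_real_derivative_powr
          [THEN has_field_derivative_at_within])
       (auto simp: interior_open)
  then show ?thesis by simp
qed

lemma jensen_powr:
  fixes y :: "'a \<Rightarrow> real"
  assumes X: "finite X" "X \<noteq> {}" and y: "\<And>x. x \<in> X \<Longrightarrow> 0 \<le> y x" and q: "1 \<le> q"
  shows "((\<Sum>x\<in>X. y x) / card X) powr q \<le> (\<Sum>x\<in>X. y x powr q) / card X"
proof -
  define M where "M = (\<Sum>x\<in>X. y x) / card X"
  have cX: "real (card X) > 0" using X by (simp add: card_gt_0_iff)
  have M0: "M \<ge> 0" unfolding M_def using y by (intro divide_nonneg_nonneg sum_nonneg) auto
  show ?thesis
  proof (cases "M = 0")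
    case True
    then show ?thesis unfolding M_def[symmetric] by (auto intro!: divide_nonneg_nonneg sum_nonneg)
  next
    case False
    then have Mp: "M > 0" using M0 by auto
    have "(\<Sum>x\<in>X. y x powr q) \<ge> (\<Sum>x\<in>X. M powr q + q * M powr (q - 1) * (y x - M))"
      using y q Mp by (intro sum_mono powr_tangent) auto
    also have "(\<Sum>x\<in>X. M powr q + q * M powr (q - 1) * (y x - M))
       = card X * M powr q + q * M powr (q - 1) * ((\<Sum>x\<in>X. y x) - card X * M)"
      by (simp add: sum.distrib sum_distrib_left[symmetric] sum_subtractf)
    also have "(\<Sum>x\<in>X. y x) - card X * M = 0" using cX by (simp add: M_def)
    finally have "card X * M powr q \<le> (\<Sum>x\<in>X. y x powr q)" by simp
    then show ?thesis using cX unfolding M_def[symmetric] by (simp add: field_simps)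
  qed
qed

lemma Exp_indep:
  assumes "\<And>x e. x \<in> torus n m \<Longrightarrow> e \<in> signs n \<Longrightarrow> G x e = F x"
  shows "Exp n m G = (\<Sum>x\<in>torus n m. F x) / card (torus n m)"
proof -
  have "(\<Sum>(x, e) \<in> torus n m \<times> signs n. G x e) = (\<Sum>x\<in>torus n m. \<Sum>e\<in>signs n. G x e)"
    by (rule sum.cartesian_product[symmetric])
  also have "\<dots> = (\<Sum>x\<in>torus n m. card (signs n) * F x)"
    using assms by (intro sum.cong) auto
  finally show ?thesis unfolding Exp_def
    by (simp add: card_cartesian_product sum_distrib_left[symmetric] card_signs)
qed

lemma Exp_le:
  assumes "m \<ge> 1" "\<And>x e. x \<in> torus n m \<Longrightarrow> e \<in> signs n \<Longrightarrow> G x e \<le> B"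
  shows "Exp n m G \<le> B"
proof -
  have cpos: "real (card (torus n m \<times> signs n)) > 0"
    using assms(1) by (simp add: card_cartesian_product card_torus card_signs)
  have "(\<Sum>(x, e) \<in> torus n m \<times> signs n. G x e) \<le> (\<Sum>(x, e) \<in> torus n m \<times> signs n. B)"
    using assms(2) by (intro sum_mono) auto
  also have "\<dots> = card (torus n m \<times> signs n) * B" by simp
  finally show ?thesis unfolding Exp_def using cpos by (simp add: divide_simps mult.commute)
qed

lemma aux_cancel: assumes "C > 0" shows "a / 2 * (C + C * b) / (C::real) = a * (1 + b) / 2"
proof -
  have "C + C * b = (1 + b) * C" by (simp add: algebra_simps)
  then have "a / 2 * (C + C * b) / C = (a / 2 * (1 + b)) * C / C" by simp
  also have "\<dots> = a / 2 * (1 + b)" using assms by simp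
  finally show ?thesis by simp
qed

definition fF :: "nat \<Rightarrow> nat \<Rightarrow> real \<Rightarrow> (nat \<Rightarrow> int) \<Rightarrow> real" where
  "fF n m \<theta> x = cos (\<theta> * (\<Sum>i<n. Wf m (x i)))"

lemma fF_addm: assumes "m \<ge> 1"
  shows "fF n m \<theta> (addm n m x y) = cos (\<theta> * (\<Sum>i<n. Wf m (x i + y i)))"
  unfolding fF_def addm_def by (simp add: W_mod)

lemma term2:
  assumes "m \<ge> 1" "p \<ge> 0"
  shows "Exp n m (\<lambda>x e. \<bar>fF n m \<theta> (addm n m x e) - fF n m \<theta> x\<bar> powr p) \<le> 2 powr p"
proof (rule Exp_le[OF assms(1)])
  fix x e
  have "\<bar>fF n m \<theta> (addm n m x e) - fF n m \<theta> x\<bar> \<le> 2"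
    unfolding fF_def using cos_le_one cos_ge_minus_one by (smt (verit))
  then show "\<bar>fF n m \<theta> (addm n m x e) - fF n m \<theta> x\<bar> powr p \<le> 2 powr p"
    using assms by (intro powr_mono2) auto
qed

lemma prod_if_j: "j < n \<Longrightarrow> (\<Prod>i<n. if i = j then a else b) = a * b ^ (n - 1)"
proof -
  assume j: "j < n"
  have "(\<Prod>i<n. if i = j then a else b) = (\<Prod>i\<in>{..<n} \<inter> {i. i = j}. a) * (\<Prod>i\<in>{..<n} \<inter> - {i. i = j}. b)"
    by (rule prod.If_cases) auto
  also have "{..<n} \<inter> {i. i = j} = {j}" using j by auto
  finally have e: "(\<Prod>i<n. if i = j then a else b) = a * (\<Prod>i\<in>{..<n} \<inter> - {i. i = j}. b)" by simp
  have "card ({..<n} \<inter> - {i. i = j}) = n - 1"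
  proof -
    have "{..<n} \<inter> - {i. i = j} = {..<n} - {j}" by auto
    then show ?thesis using j by simp
  qed
  then show ?thesis using e by simp
qed

lemma term1:
  assumes m1: "m \<ge> 1" and j: "j < n" and th: "\<theta> \<ge> 0" "2 * \<theta> * real m \<le> 8/5" and p: "p \<ge> 2"
  shows "Exp n m (\<lambda>x e. \<bar>fF n m \<theta> (addm n m x (basisv j)) - fF n m \<theta> x\<bar> powr p)
     \<le> \<theta> powr p * (1 + psi m (2 * \<theta>) ^ (n - 1)) / 2"
proof -
  define h where "h i t = \<theta> * (Wf m (t + basisv j i) + Wf m t)" for i t
  define \<phi> where "\<phi> = psi m (2 * \<theta>)"
  have phi0: "\<phi> \<ge> 0" unfolding \<phi>_def using th m1 by (intro psi_nonneg) auto
  have pw: "\<bar>fF n m \<theta> (addm n m x (basisv j)) - fF n m \<theta> x\<bar> powr p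
      \<le> \<theta> powr p * ((1 - cos (\<Sum>i<n. h i (x i))) / 2)" for x
  proof -
    define s' where "s' = (\<Sum>i<n. Wf m (x i + basisv j i))"
    define s where "s = (\<Sum>i<n. Wf m (x i))"
    have "s' - s = (\<Sum>i<n. Wf m (x i + basisv j i) - Wf m (x i))"
      by (simp add: s'_def s_def sum_subtractf)
    also have "\<dots> = (\<Sum>i<n. if i = j then Wf m (x j + 1) - Wf m (x j) else 0)"
      by (intro sum.cong) (auto simp: basisv_def)
    also have "\<dots> = Wf m (x j + 1) - Wf m (x j)" using j by simp
    finally have d: "\<bar>s' - s\<bar> \<le> 1" using W_lip[OF m1] by simp
    have sumh: "(\<Sum>i<n. h i (x i)) = \<theta> * s' + \<theta> * s"
      by (simp add: h_def s'_def s_def sum.distrib sum_distrib_left distrib_left)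
    have "fF n m \<theta> (addm n m x (basisv j)) - fF n m \<theta> x = cos (\<theta> * s') - cos (\<theta> * s)"
      unfolding fF_addm[OF m1] by (simp add: fF_def s'_def s_def)
    also have "\<dots> = 2 * sin ((\<theta> * s' + \<theta> * s) / 2) * sin ((\<theta> * s - \<theta> * s') / 2)"
      by (rule cos_diff_cos)
    finally have e1: "\<bar>fF n m \<theta> (addm n m x (basisv j)) - fF n m \<theta> x\<bar>
        = \<bar>sin ((\<theta> * s' + \<theta> * s) / 2)\<bar> * (2 * \<bar>sin ((\<theta> * s - \<theta> * s') / 2)\<bar>)"
      by (simp add: abs_mult)
    have "2 * \<bar>sin ((\<theta> * s - \<theta> * s') / 2)\<bar> \<le> 2 * \<bar>(\<theta> * s - \<theta> * s') / 2\<bar>"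
      using abs_sin_x_le_abs_x[of "(\<theta> * s - \<theta> * s') / 2"] by linarith
    also have "\<dots> = \<theta> * \<bar>s' - s\<bar>" using th by (simp add: abs_mult right_diff_distrib[symmetric] abs_minus_commute)
    also have "\<dots> \<le> \<theta>" using d th by (simp add: mult_left_le)
    finally have e2: "\<bar>fF n m \<theta> (addm n m x (basisv j)) - fF n m \<theta> x\<bar> \<le> \<theta> * \<bar>sin ((\<theta> * s' + \<theta> * s) / 2)\<bar>"
      unfolding e1 by (subst mult.commute[of \<theta>]) (intro mult_left_mono, auto)
    define Y where "Y = (\<theta> * s' + \<theta> * s) / 2"
    have "\<bar>fF n m \<theta> (addm n m x (basisv j)) - fF n m \<theta> x\<bar> powr p \<le> (\<theta> * \<bar>sin Y\<bar>) powr p"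
      using e2 p unfolding Y_def by (intro powr_mono2) auto
    also have "\<dots> = \<theta> powr p * \<bar>sin Y\<bar> powr p" using th by (simp add: powr_mult)
    also have "\<bar>sin Y\<bar> powr p \<le> \<bar>sin Y\<bar> powr 2"
      using p by (intro powr_mono') auto
    also have "\<bar>sin Y\<bar> powr 2 = (1 - cos (2 * Y)) / 2"
      using cos_double_sin[of Y] by simp
    also have "2 * Y = (\<Sum>i<n. h i (x i))" using sumh by (simp add: Y_def)
    finally show ?thesis using th by (simp add: mult_left_mono)
  qed
  have cT: "real (card (torus n m)) = (2 * real m) ^ n" by (simp add: card_torus)
  have cTp: "(2 * real m) ^ n > 0" using m1 by simp
  have "\<bar>\<Sum>x\<in>torus n m. cos (\<Sum>i<n. h i (x i))\<bar> \<le> (\<Prod>i<n. norm (\<Sum>t\<in>{0..<2 * int m}. cis (h i t)))"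
    by (rule torus_cos_abs)
  also have "\<dots> \<le> (\<Prod>i<n. if i = j then 2 * real m else 2 * real m * \<phi>)"
  proof (rule prod_mono)
    fix i assume "i \<in> {..<n}"
    show "0 \<le> norm (\<Sum>t\<in>{0..<2 * int m}. cis (h i t)) \<and>
          norm (\<Sum>t\<in>{0..<2 * int m}. cis (h i t)) \<le> (if i = j then 2 * real m else 2 * real m * \<phi>)"
    proof (cases "i = j")
      case True then show ?thesis using norm_cis_le by simp
    next
      case False
      then have "h i = (\<lambda>t. (2 * \<theta>) * Wf m t)" by (auto simp: h_def basisv_def fun_eq_iff)
      then show ?thesis using False norm_cis_W[OF m1, of "2 * \<theta>"] th phi0 by (simp add: \<phi>_def)
    qed
  qed
  also have "\<dots> = 2 * real m * (2 * real m * \<phi>) ^ (n - 1)" by (rule prod_if_j[OF j])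
  also have "\<dots> = (2 * real m) ^ n * \<phi> ^ (n - 1)"
  proof -
    from j obtain n' where "n = Suc n'" by (cases n) auto
    then show ?thesis by (simp add: power_mult_distrib)
  qed
  finally have cb: "- (\<Sum>x\<in>torus n m. cos (\<Sum>i<n. h i (x i))) \<le> (2 * real m) ^ n * \<phi> ^ (n - 1)" by linarith
  have "Exp n m (\<lambda>x e. \<bar>fF n m \<theta> (addm n m x (basisv j)) - fF n m \<theta> x\<bar> powr p)
     = (\<Sum>x\<in>torus n m. \<bar>fF n m \<theta> (addm n m x (basisv j)) - fF n m \<theta> x\<bar> powr p) / card (torus n m)"
    by (rule Exp_indep) auto
  also have "\<dots> \<le> (\<Sum>x\<in>torus n m. \<theta> powr p * ((1 - cos (\<Sum>i<n. h i (x i))) / 2)) / card (torus n m)"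
    using pw by (intro divide_right_mono sum_mono) auto
  also have "(\<Sum>x\<in>torus n m. \<theta> powr p * ((1 - cos (\<Sum>i<n. h i (x i))) / 2))
      = \<theta> powr p / 2 * (card (torus n m) - (\<Sum>x\<in>torus n m. cos (\<Sum>i<n. h i (x i))))"
    by (simp add: sum_distrib_left[symmetric] sum_subtractf sum_divide_distrib[symmetric] field_simps)
  also have "\<dots> \<le> \<theta> powr p / 2 * ((2 * real m) ^ n + (2 * real m) ^ n * \<phi> ^ (n - 1))"
    using cb cT by (intro mult_left_mono) auto
  finally have "Exp n m (\<lambda>x e. \<bar>fF n m \<theta> (addm n m x (basisv j)) - fF n m \<theta> x\<bar> powr p)
     \<le> \<theta> powr p / 2 * ((2 * real m) ^ n + (2 * real m) ^ n * \<phi> ^ (n - 1)) / card (torus n m)"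
    by (simp add: divide_right_mono)
  also have "\<dots> = \<theta> powr p * (1 + \<phi> ^ (n - 1)) / 2"
    unfolding cT using cTp by (rule aux_cancel)
  finally show ?thesis by (simp add: \<phi>_def)
qed

lemma abs_powr_sq: assumes "p > 0" shows "\<bar>d::real\<bar> powr p = (d^2) powr (p/2)"
proof (cases "d = 0")
  case True then show ?thesis using assms by simp
next
  case False
  then have "\<bar>d\<bar> powr 2 = \<bar>d\<bar> ^ 2" by (simp add: powr_numeral)
  then have e: "d^2 = \<bar>d\<bar> powr 2" by simp
  have "(d^2) powr (p/2) = (\<bar>d\<bar> powr 2) powr (p/2)" by (simp only: e)
  also have "\<dots> = \<bar>d\<bar> powr p" by (subst powr_powr) simp
  finally show ?thesis by linarith
qed

lemma cos_diff_sq: "(cos (y::real) - cos z)^2 = 1 + cos (2*y)/2 + cos (2*z)/2 - cos (y - z) - cos (y + z)"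
proof -
  have 0: "(cos y - cos z)^2 = cos y ^2 + cos z ^2 - 2 * (cos y * cos z)" by (simp add: power2_eq_square algebra_simps)
  have 1: "cos y * cos z = (cos (y - z) + cos (y + z)) / 2" by (rule cos_times_cos)
  have 2: "cos y ^ 2 = (1 + cos (2*y)) / 2" using cos_double_cos[of y] by simp
  have 3: "cos z ^ 2 = (1 + cos (2*z)) / 2" using cos_double_cos[of z] by simp
  show ?thesis unfolding 0 1 2 3 by (simp add: field_simps)
qed

lemma prod_if_S: assumes "S \<subseteq> {..<n}" shows "(\<Prod>i<n. if i \<in> S then a else b) = a ^ card S * b ^ (n - card S)"
proof -
  have "(\<Prod>i<n. if i \<in> S then a else b) = (\<Prod>i\<in>{..<n} \<inter> {i. i \<in> S}. a) * (\<Prod>i\<in>{..<n} \<inter> - {i. i \<in> S}. b)"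
    by (rule prod.If_cases) auto
  moreover have "{..<n} \<inter> {i. i \<in> S} = S" using assms by auto
  moreover have "{..<n} \<inter> - {i. i \<in> S} = {..<n} - S" by auto
  moreover have "card ({..<n} - S) = n - card S" using assms by (simp add: card_Diff_subset finite_subset)
  ultimately show ?thesis by simp
qed

definition TS :: "nat \<Rightarrow> nat \<Rightarrow> nat set \<Rightarrow> real \<Rightarrow> real \<Rightarrow> (nat \<Rightarrow> int) \<Rightarrow> real" where
  "TS n m S a b x = (\<Sum>i<n. (if i \<in> S then a else b) * Wf m (x i))"

lemma TS_add: "TS n m S a b x + TS n m S c d x = TS n m S (a + c) (b + d) x"
  unfolding TS_def by (simp add: sum.distrib[symmetric]) (intro sum.cong, auto simp: algebra_simps)

lemma TS_diff: "TS n m S a b x - TS n m S c d x = TS n m S (a - c) (b - d) x"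
  unfolding TS_def by (simp add: sum_subtractf[symmetric]) (intro sum.cong, auto simp: algebra_simps)

lemma TS_scale: "r * TS n m S a b x = TS n m S (r * a) (r * b) x"
  unfolding TS_def by (simp add: sum_distrib_left) (intro sum.cong, auto)

lemma TS_cos_sum: assumes "m \<ge> 1" "S \<subseteq> {..<n}"
  shows "(\<Sum>x\<in>torus n m. cos (TS n m S a b x)) = (2 * real m) ^ n * (psi m a ^ card S * psi m b ^ (n - card S))"
proof -
  have "(\<Sum>x\<in>torus n m. cos (TS n m S a b x)) = (2 * real m) ^ n * (\<Prod>i<n. psi m (if i \<in> S then a else b))"
    unfolding TS_def by (rule torus_cos_prod[OF assms(1)])
  also have "(\<Prod>i<n. psi m (if i \<in> S then a else b)) = (\<Prod>i<n. if i \<in> S then psi m a else psi m b)"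
    by (intro prod.cong) auto
  also have "\<dots> = psi m a ^ card S * psi m b ^ (n - card S)" by (rule prod_if_S[OF assms(2)])
  finally show ?thesis .
qed

lemma W_shift_sign: assumes "m \<ge> 1" "e \<in> {-1, 1}" shows "Wf m (t + int m * e) = - Wf m t"
proof -
  from assms(2) have "e = -1 \<or> e = 1" by auto
  then show ?thesis
  proof
    assume "e = -1"
    then have "t + int m * e = t - int m" by simp
    then show ?thesis using W_anti'[OF assms(1), of t] by simp
  next
    assume "e = 1"
    then show ?thesis using W_anti[OF assms(1), of t] by simp
  qed
qed

lemma termS:
  assumes m1: "m \<ge> 1" and S: "S \<subseteq> {..<n}" "card S = k" and th: "\<theta> \<ge> 0" "2 * \<theta> * real m \<le> 8/5"
    and p: "p \<ge> 2"
  shows "Exp n m (\<lambda>x e. \<bar>fF n m \<theta> (addm n m x (\<lambda>i. int m * epsS S e i)) - fF n m \<theta> x\<bar> powr p)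
     \<ge> (1 + psi m (2 * \<theta>) ^ n - psi m (2 * \<theta>) ^ (n - k) - psi m (2 * \<theta>) ^ k) powr (p / 2)"
proof -
  define \<phi> where "\<phi> = psi m (2 * \<theta>)"
  define D where "D x = cos (TS n m S (-\<theta>) \<theta> x) - cos (TS n m S \<theta> \<theta> x)" for x
  have kn: "k \<le> n" using S card_mono[OF _ S(1)] by auto
  have eqD: "\<bar>fF n m \<theta> (addm n m x (\<lambda>i. int m * epsS S e i)) - fF n m \<theta> x\<bar> powr p = \<bar>D x\<bar> powr p"
    if x: "x \<in> torus n m" and e: "e \<in> signs n" for x e
  proof -
    have "\<theta> * (\<Sum>i<n. Wf m (x i + int m * epsS S e i)) = TS n m S (-\<theta>) \<theta> x"
      unfolding TS_def sum_distrib_left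
    proof (intro sum.cong refl)
      fix i assume i: "i \<in> {..<n}"
      show "\<theta> * Wf m (x i + int m * epsS S e i) = (if i \<in> S then - \<theta> else \<theta>) * Wf m (x i)"
      proof (cases "i \<in> S")
        case True
        have "e i \<in> {-1, 1}" using e i unfolding signs_def by (auto simp: PiE_iff)
        then show ?thesis using True W_shift_sign[OF m1, of "e i" "x i"] by (simp add: epsS_def)
      qed (simp add: epsS_def)
    qed
    moreover have "\<theta> * (\<Sum>i<n. Wf m (x i)) = TS n m S \<theta> \<theta> x"
      unfolding TS_def sum_distrib_left by simp
    ultimately show ?thesis unfolding fF_addm[OF m1] D_def by (simp add: fF_def)
  qed
  have D2: "(D x)^2 = 1 + cos (TS n m S (-2*\<theta>) (2*\<theta>) x)/2 + cos (TS n m S (2*\<theta>) (2*\<theta>) x)/2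
        - cos (TS n m S (-2*\<theta>) 0 x) - cos (TS n m S 0 (2*\<theta>) x)" for x
    unfolding D_def cos_diff_sq TS_scale TS_add TS_diff by (simp add: algebra_simps)
  have cT: "real (card (torus n m)) = (2 * real m) ^ n" by (simp add: card_torus)
  have cTp: "(2 * real m) ^ n > 0" using m1 by simp
  have phin: "psi m (-2 * \<theta>) = \<phi>" using psi_neg[of m "2 * \<theta>"] by (simp add: \<phi>_def)
  have pk: "\<phi> ^ k * \<phi> ^ (n - k) = \<phi> ^ n" using kn by (simp add: power_add[symmetric])
  have sumD2: "(\<Sum>x\<in>torus n m. (D x)^2) = (2 * real m) ^ n * (1 + \<phi> ^ n - \<phi> ^ (n - k) - \<phi> ^ k)"
  proof -
    have "(\<Sum>x\<in>torus n m. (D x)^2) = card (torus n m) + (\<Sum>x\<in>torus n m. cos (TS n m S (-2*\<theta>) (2*\<theta>) x))/2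
        + (\<Sum>x\<in>torus n m. cos (TS n m S (2*\<theta>) (2*\<theta>) x))/2
        - (\<Sum>x\<in>torus n m. cos (TS n m S (-2*\<theta>) 0 x)) - (\<Sum>x\<in>torus n m. cos (TS n m S 0 (2*\<theta>) x))"
      unfolding D2 by (simp add: sum.distrib sum_subtractf sum_divide_distrib)
    also have "\<dots> = (2 * real m) ^ n * (1 + \<phi> ^ n - \<phi> ^ (n - k) - \<phi> ^ k)"
      unfolding TS_cos_sum[OF m1 S(1)] cT S(2) phin psi_0[OF m1] \<phi>_def[symmetric] pk
      by (simp add: algebra_simps)
    finally show ?thesis .
  qed
  have avgQ: "(\<Sum>x\<in>torus n m. (D x)^2) / card (torus n m) = 1 + \<phi> ^ n - \<phi> ^ (n - k) - \<phi> ^ k"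
    unfolding sumD2 cT using cTp m1 by (intro nonzero_mult_div_cancel_left) auto
  have "(1 + \<phi> ^ n - \<phi> ^ (n - k) - \<phi> ^ k) powr (p / 2)
      = ((\<Sum>x\<in>torus n m. (D x)^2) / card (torus n m)) powr (p / 2)"
    by (simp only: avgQ)
  also have "\<dots> \<le> (\<Sum>x\<in>torus n m. ((D x)^2) powr (p / 2)) / card (torus n m)"
  proof (rule jensen_powr)
    show "torus n m \<noteq> {}" using card_torus[of n m] m1 by (auto simp: card_eq_0_iff)
  qed (use p in \<open>auto simp: finite_torus\<close>)
  also have "\<dots> = (\<Sum>x\<in>torus n m. \<bar>D x\<bar> powr p) / card (torus n m)"
    using p by (simp add: abs_powr_sq)
  also have "\<dots> = Exp n m (\<lambda>x e. \<bar>fF n m \<theta> (addm n m x (\<lambda>i. int m * epsS S e i)) - fF n m \<theta> x\<bar> powr p)"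
    by (rule Exp_indep[symmetric]) (rule eqD)
  finally show ?thesis by (simp add: \<phi>_def)
qed

lemma exp_bound: "exp (12/5 :: real) > 8"
proof -
  have "(13/10 :: real) \<le> exp (3/10)" using exp_ge_add_one_self[of "3/10::real"] by simp
  then have "(13/10 :: real) ^ 8 \<le> exp (3/10) ^ 8" by (intro power_mono) auto
  also have "exp (3/10 :: real) ^ 8 = exp (12/5)" by (simp flip: exp_of_nat_mult)
  finally have "(13/10 :: real) ^ 8 \<le> exp (12/5)" .
  moreover have "(13/10 :: real) ^ 8 > 8" by (simp add: eval_nat_numeral)
  ultimately show ?thesis by linarith
qed

lemma phi_k_bound:
  assumes "0 \<le> \<phi>" "\<phi> \<le> 1 - 12 / (5 * real k)" "k \<ge> 1"
  shows "\<phi> ^ k \<le> 1/8"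
proof -
  have "\<phi> \<le> exp (- (12 / (5 * real k)))" using assms(2) exp_ge_add_one_self[of "- (12 / (5 * real k))"] by simp
  then have "\<phi> ^ k \<le> exp (- (12 / (5 * real k))) ^ k" using assms by (intro power_mono) auto
  also have "\<dots> = exp (- (12/5))" using assms(3) by (simp flip: exp_of_nat_mult)
  also have "\<dots> = 1 / exp (12/5)" by (simp add: exp_minus field_simps)
  also have "\<dots> \<le> 1/8" using exp_bound by (simp add: divide_simps)
  finally show ?thesis .
qed

lemma ratio_trick:
  fixes a Q q :: real
  assumes "0 < a" "a \<le> Q" "1 \<le> q"
  shows "a powr q \<le> a * Q powr (q - 1)"
proof -
  have "a powr q = a * a powr (q - 1)" using assms by (simp add: powr_diff field_simps)
  also have "a powr (q - 1) \<le> Q powr (q - 1)" using assms by (intro powr_mono2) auto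
  then have "a * a powr (q - 1) \<le> a * Q powr (q - 1)" using assms by (intro mult_left_mono) auto
  finally show ?thesis .
qed

theorem mainTheorem2:
  fixes p \<alpha> :: real and m n k :: nat
  assumes "p > 2" and "0 < \<alpha>" and "\<alpha> < 1" and "m \<ge> 1" and "1 \<le> k" and "k \<le> n"
    and H: "\<forall>f :: (nat \<Rightarrow> int) \<Rightarrow> real.
      \<alpha> powr p / real (n choose k) *
        (\<Sum>S \<in> {S. S \<subseteq> {..<n} \<and> card S = k}.
          Exp n m (\<lambda>x e. \<bar>f (addm n m x (\<lambda>i. int m * epsS S e i)) - f x\<bar> powr p) / real m powr p)
      \<le> real k / real n * (\<Sum>j<n. Exp n m (\<lambda>x e. \<bar>f (addm n m x (basisv j)) - f x\<bar> powr p))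
        + (real k / real n) powr (p / 2) * Exp n m (\<lambda>x e. \<bar>f (addm n m x e) - f x\<bar> powr p)"
  shows "real k \<ge> (5 / \<alpha>) powr (2 * p / (p - 2)) \<longrightarrow> real m \<ge> \<alpha> / 3 * sqrt (real n / real k)"
proof
  assume K: "real k \<ge> (5 / \<alpha>) powr (2 * p / (p - 2))"
  show "real m \<ge> \<alpha> / 3 * sqrt (real n / real k)"
  proof (rule ccontr)
    assume "\<not> real m \<ge> \<alpha> / 3 * sqrt (real n / real k)"
    then have M: "real m < \<alpha> / 3 * sqrt (real n / real k)" by simp
    have p2: "p > 2" and a0: "0 < \<alpha>" and a1: "\<alpha> < 1" and m1: "m \<ge> 1" and k1: "1 \<le> k" and kn: "k \<le> n"
      using assms by auto
    have mpos: "real m > 0" "real m \<ge> 1" using m1 by auto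
    have kpos: "real k > 0" using k1 by simp
    have npos: "real n > 0" using k1 kn by simp
    define q where "q = p / 2"
    have q1: "q > 1" using p2 by (simp add: q_def)
    have k25: "real k \<ge> 25"
    proof -
      have e2: "2 * p / (p - 2) \<ge> 2" using p2 by (simp add: divide_simps)
      have "(5::real) powr 2 \<le> 5 powr (2 * p / (p - 2))" using e2 by (intro powr_mono) auto
      also have "\<dots> \<le> (5 / \<alpha>) powr (2 * p / (p - 2))"
        using a0 a1 e2 by (intro powr_mono2) (auto simp: divide_simps)
      finally show ?thesis using K by simp
    qed
    have sk: "sqrt (real k) \<ge> 5"
      using k25 real_sqrt_le_mono[of 25 "real k"] by simp
    have ratio: "real n / real k > (3 * real m / \<alpha>)^2"
    proof -
      have "3 * real m / \<alpha> < sqrt (real n / real k)" using M a0 by (simp add: field_simps)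
      moreover have "0 \<le> 3 * real m / \<alpha>" using a0 by simp
      ultimately have "(3 * real m / \<alpha>)^2 < (sqrt (real n / real k))^2"
        by (intro power_strict_mono) auto
      then show ?thesis using npos kpos by simp
    qed
    have r_lt: "real k / real n < (\<alpha> / (3 * real m))^2"
    proof -
      have pos: "(3 * real m / \<alpha>)^2 > 0" using a0 mpos by simp
      have pp: "0 < real n / real k * (3 * real m / \<alpha>)^2" using pos npos kpos by simp
      have "1 / (real n / real k) < 1 / (3 * real m / \<alpha>)^2" using ratio pos pp by (intro divide_strict_left_mono) auto
      then show ?thesis by (simp add: power_divide)
    qed
    have n9k: "real n > 9 * real k"
    proof -
      have "(3 * real m / \<alpha>)^2 \<ge> 3^2"
        using a0 a1 mpos by (intro power_mono) (auto simp: divide_simps)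
      then have "real n / real k > 9" using ratio by simp
      then show ?thesis using kpos by (simp add: divide_simps)
    qed
    have nk1: "n - 1 \<ge> k" and nk2: "n - k \<ge> 2 * k" using n9k by linarith+
    define \<theta> where "\<theta> = 4 / (real m * sqrt (real k))"
    have skpos: "sqrt (real k) > 0" using kpos by simp
    have th0: "\<theta> > 0" using mpos skpos by (simp add: \<theta>_def)
    have th_m: "2 * \<theta> * real m = 8 / sqrt (real k)" using mpos by (simp add: \<theta>_def)
    have th8: "2 * \<theta> * real m \<le> 8/5" unfolding th_m using sk by (simp add: divide_simps)
    define \<phi> where "\<phi> = psi m (2 * \<theta>)"
    have phi0: "0 \<le> \<phi>" unfolding \<phi>_def using th0 th8 m1 by (intro psi_nonneg) auto
    have sq64: "(2 * \<theta>)^2 * real m ^ 2 = 64 / real k"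
    proof -
      have "(2 * \<theta>)^2 * real m ^ 2 = (2 * \<theta> * real m)^2" by (simp add: power_mult_distrib)
      also have "\<dots> = 64 / real k" unfolding th_m using kpos by (simp add: power_divide)
      finally show ?thesis .
    qed
    have phiU: "\<phi> \<le> 1 - 12 / (5 * real k)"
    proof -
      have "\<phi> \<le> 1 - 3/80 * ((2 * \<theta>)^2 * real m ^ 2)"
        unfolding \<phi>_def using th0 th8 m1 psi_upper[of m "2 * \<theta>"] by (simp add: mult.assoc)
      then have "\<phi> \<le> 1 - 3/80 * (64 / real k)" unfolding sq64 .
      moreover have "3/80 * (64 / real k) = 12 / (5 * real k)" by simp
      ultimately show ?thesis by linarith
    qed
    have phi1: "\<phi> \<le> 1" using phiU kpos by (smt (verit) divide_pos_pos)
    have phik: "\<phi> ^ k \<le> 1/8" using phi_k_bound[OF phi0 phiU k1] .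
    have phin1: "\<phi> ^ (n - 1) \<le> \<phi> ^ k" using nk1 phi0 phi1 by (intro power_decreasing) auto
    have phink: "\<phi> ^ (n - k) \<le> 1/64"
    proof -
      have "\<phi> ^ (n - k) \<le> \<phi> ^ (2 * k)" using nk2 phi0 phi1 by (intro power_decreasing) auto
      also have "\<dots> = (\<phi> ^ k)^2" by (simp add: power_mult[symmetric] mult.commute)
      also have "\<dots> \<le> (1/8)^2" using phik phi0 by (intro power_mono) auto
      also have "(1/8::real)^2 = 1/64" by (simp add: power2_eq_square)
      finally show ?thesis .
    qed
    define Q where "Q = 1 + \<phi> ^ n - \<phi> ^ (n - k) - \<phi> ^ k"
    have QL: "Q \<ge> 55/64" using phink phik zero_le_power[OF phi0, of n] by (simp add: Q_def)
    have Qpos: "Q > 0" using QL by simp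
    define f where "f = fF n m \<theta>"
    define SS where "SS = {S. S \<subseteq> {..<n} \<and> card S = k}"
    have Hf: "\<alpha> powr p / real (n choose k) *
        (\<Sum>S \<in> SS. Exp n m (\<lambda>x e. \<bar>f (addm n m x (\<lambda>i. int m * epsS S e i)) - f x\<bar> powr p) / real m powr p)
      \<le> real k / real n * (\<Sum>j<n. Exp n m (\<lambda>x e. \<bar>f (addm n m x (basisv j)) - f x\<bar> powr p))
        + (real k / real n) powr (p / 2) * Exp n m (\<lambda>x e. \<bar>f (addm n m x e) - f x\<bar> powr p)"
      using H unfolding SS_def by blast
    have cardS: "card SS = n choose k" unfolding SS_def using n_subsets[of "{..<n}" k] by simp
    have finS: "finite SS" unfolding SS_def by (rule finite_subset[of _ "Pow {..<n}"]) auto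
    have binpos: "real (n choose k) > 0" using kn by simp
    have mp: "real m powr p > 0" using mpos by simp
    have L: "\<alpha> powr p * Q powr q / real m powr p \<le> \<alpha> powr p / real (n choose k) *
        (\<Sum>S \<in> SS. Exp n m (\<lambda>x e. \<bar>f (addm n m x (\<lambda>i. int m * epsS S e i)) - f x\<bar> powr p) / real m powr p)"
    proof -
      have "(\<Sum>S \<in> SS. Q powr q / real m powr p) \<le>
          (\<Sum>S \<in> SS. Exp n m (\<lambda>x e. \<bar>f (addm n m x (\<lambda>i. int m * epsS S e i)) - f x\<bar> powr p) / real m powr p)"
      proof (rule sum_mono)
        fix S assume "S \<in> SS"
        then have S: "S \<subseteq> {..<n}" "card S = k" by (auto simp: SS_def)
        have "Q powr q \<le> Exp n m (\<lambda>x e. \<bar>f (addm n m x (\<lambda>i. int m * epsS S e i)) - f x\<bar> powr p)"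
          unfolding f_def Q_def q_def \<phi>_def using termS[OF m1 S th0[THEN less_imp_le] th8] p2 by simp
        then show "Q powr q / real m powr p \<le> Exp n m (\<lambda>x e. \<bar>f (addm n m x (\<lambda>i. int m * epsS S e i)) - f x\<bar> powr p) / real m powr p"
          using mp by (simp add: divide_right_mono)
      qed
      then have "real (n choose k) * (Q powr q / real m powr p) \<le>
          (\<Sum>S \<in> SS. Exp n m (\<lambda>x e. \<bar>f (addm n m x (\<lambda>i. int m * epsS S e i)) - f x\<bar> powr p) / real m powr p)"
        using cardS by simp
      then have "\<alpha> powr p / real (n choose k) * (real (n choose k) * (Q powr q / real m powr p)) \<le> \<alpha> powr p / real (n choose k) *
        (\<Sum>S \<in> SS. Exp n m (\<lambda>x e. \<bar>f (addm n m x (\<lambda>i. int m * epsS S e i)) - f x\<bar> powr p) / real m powr p)"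
        using binpos by (intro mult_left_mono) auto
      moreover have "\<alpha> powr p / real (n choose k) * (real (n choose k) * (Q powr q / real m powr p)) = \<alpha> powr p * Q powr q / real m powr p"
        using binpos by simp
      ultimately show ?thesis by linarith
    qed
    have F: "real k / real n * (\<Sum>j<n. Exp n m (\<lambda>x e. \<bar>f (addm n m x (basisv j)) - f x\<bar> powr p))
        \<le> 9/16 * (real k * \<theta> powr p)"
    proof -
      have "(\<Sum>j<n. Exp n m (\<lambda>x e. \<bar>f (addm n m x (basisv j)) - f x\<bar> powr p)) \<le> (\<Sum>j<n. 9/16 * \<theta> powr p)"
      proof (rule sum_mono)
        fix j assume "j \<in> {..<n}"
        then have j: "j < n" by simp
        have "Exp n m (\<lambda>x e. \<bar>f (addm n m x (basisv j)) - f x\<bar> powr p) \<le> \<theta> powr p * (1 + \<phi> ^ (n - 1)) / 2"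
          unfolding f_def \<phi>_def using term1[OF m1 j th0[THEN less_imp_le] th8] p2 by simp
        also have "\<dots> \<le> \<theta> powr p * (9/8) / 2"
          using phin1 phik by (intro divide_right_mono mult_left_mono) auto
        finally show "Exp n m (\<lambda>x e. \<bar>f (addm n m x (basisv j)) - f x\<bar> powr p) \<le> 9/16 * \<theta> powr p" by simp
      qed
      also have "\<dots> = real n * (9/16 * \<theta> powr p)" by simp
      finally have "real k / real n * (\<Sum>j<n. Exp n m (\<lambda>x e. \<bar>f (addm n m x (basisv j)) - f x\<bar> powr p))
          \<le> real k / real n * (real n * (9/16 * \<theta> powr p))"
        using kpos npos by (intro mult_left_mono) auto
      also have "\<dots> = 9/16 * (real k * \<theta> powr p)" using npos by simp
      finally show ?thesis .
    qed
    have S2: "(real k / real n) powr (p / 2) * Exp n m (\<lambda>x e. \<bar>f (addm n m x e) - f x\<bar> powr p)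
        \<le> (real k / real n) powr (p / 2) * 2 powr p"
      unfolding f_def using term2[OF m1, of p n \<theta>] p2 by (intro mult_left_mono) auto
    have p0: "p > 0" using p2 by simp
    have kth: "real k * \<theta> powr p \<le> (\<alpha> / real m) powr p * (4/5) powr p"
    proof -
      have sqk: "sqrt (real k) powr p = real k powr (p/2)"
      proof -
        have "sqrt (real k) powr p = (real k powr (1/2)) powr p" using powr_half_sqrt[of "real k"] by simp
        also have "\<dots> = real k powr (p/2)" by (subst powr_powr) simp
        finally show ?thesis .
      qed
      have thp: "\<theta> powr p = 4 powr p / (real m powr p * real k powr (p/2))"
        unfolding \<theta>_def using mpos skpos by (simp add: powr_divide powr_mult sqk)
      have Kp: "real k powr ((p-2)/2) \<ge> (5/\<alpha>) powr p"
      proof -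
        have "((5/\<alpha>) powr (2*p/(p-2))) powr ((p-2)/2) \<le> real k powr ((p-2)/2)"
          using K p2 by (intro powr_mono2) auto
        moreover have "2*p/(p-2) * ((p-2)/2) = p" using p2 by (simp add: field_simps)
        ultimately show ?thesis by (simp add: powr_powr)
      qed
      have kk: "real k powr (p/2) = real k * real k powr ((p-2)/2)"
      proof -
        have "real k powr (p/2) = real k powr (1 + (p-2)/2)" by (simp add: field_simps)
        also have "\<dots> = real k powr 1 * real k powr ((p-2)/2)" by (rule powr_add)
        finally show ?thesis using kpos by simp
      qed
      have pos1: "real k powr ((p-2)/2) > 0" "(5/\<alpha>) powr p > 0" using kpos a0 by auto
      have "real k * \<theta> powr p = 4 powr p / (real m powr p * real k powr ((p-2)/2))"
        unfolding thp kk using kpos by (simp add: field_simps)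
      also have "\<dots> \<le> 4 powr p / (real m powr p * (5/\<alpha>) powr p)"
        using Kp pos1 mp by (intro divide_left_mono mult_left_mono mult_pos_pos) auto
      also have "\<dots> = (\<alpha> / real m) powr p * (4/5) powr p"
        using a0 mpos by (simp add: powr_divide powr_mult field_simps)
      finally show ?thesis .
    qed
    have r2: "(real k / real n) powr (p / 2) < (\<alpha> / real m) powr p * (1/3) powr p"
    proof -
      have "(real k / real n) powr (p / 2) < ((\<alpha> / (3 * real m))^2) powr (p / 2)"
        using r_lt p2 kpos npos by (intro powr_less_mono2) auto
      also have "((\<alpha> / (3 * real m))^2) powr (p / 2) = \<bar>\<alpha> / (3 * real m)\<bar> powr p"
        by (rule sym[OF abs_powr_sq[OF p0]])
      also have "\<bar>\<alpha> / (3 * real m)\<bar> = (\<alpha> / real m) * (1/3)" using a0 mpos by simp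
      also have "((\<alpha> / real m) * (1/3)) powr p = (\<alpha> / real m) powr p * (1/3) powr p"
        by (rule powr_mult)
      finally show ?thesis .
    qed
    define A where "A = (\<alpha> / real m) powr p"
    have Apos: "A > 0" using a0 mpos by (simp add: A_def)
    have LA: "\<alpha> powr p * Q powr q / real m powr p = A * Q powr q"
      using a0 mpos by (simp add: A_def powr_divide)
    have main: "A * Q powr q < A * (9/16 * (4/5) powr p + (1/3) powr p * 2 powr p)"
    proof -
      have "A * Q powr q \<le> 9/16 * (real k * \<theta> powr p) + (real k / real n) powr (p / 2) * 2 powr p"
        using L Hf F S2 LA by linarith
      also have "\<dots> < 9/16 * (A * (4/5) powr p) + (A * (1/3) powr p) * 2 powr p"
        using kth r2 unfolding A_def by (intro add_le_less_mono mult_left_mono mult_strict_right_mono) auto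
      finally show ?thesis by (simp add: algebra_simps)
    qed
    then have Qq: "Q powr q < 9/16 * (16/25) powr q + (4/9) powr q"
    proof -
      have "Q powr q < 9/16 * (4/5) powr p + (1/3) powr p * 2 powr p" using main Apos by simp
      moreover have "(4/5::real) powr p = (16/25) powr q"
        using abs_powr_sq[OF p0, of "4/5"] by (simp add: q_def power2_eq_square)
      moreover have "(1/3::real) powr p * 2 powr p = (4/9) powr q"
      proof -
        have "(1/3::real) powr p * 2 powr p = (2/3) powr p" by (simp add: powr_mult[symmetric])
        also have "\<dots> = (4/9) powr q" using abs_powr_sq[OF p0, of "2/3"] by (simp add: q_def power2_eq_square)
        finally show ?thesis .
      qed
      ultimately show ?thesis by simp
    qed
    have t1: "(16/25::real) powr q \<le> 16/25 * Q powr (q - 1)" using QL q1 by (intro ratio_trick) auto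
    have t2: "(4/9::real) powr q \<le> 4/9 * Q powr (q - 1)" using QL q1 by (intro ratio_trick) auto
    have QQ: "Q powr q = Q * Q powr (q - 1)" using Qpos by (simp add: powr_diff field_simps)
    have Qm: "Q powr (q - 1) > 0" using Qpos by simp
    have "9/16 * (16/25) powr q + (4/9) powr q \<le> (9/16 * (16/25) + 4/9) * Q powr (q - 1)"
      using t1 t2 by (simp add: algebra_simps)
    also have "\<dots> \<le> Q * Q powr (q - 1)" using QL Qm by (intro mult_right_mono) auto
    finally show False using Qq QQ by linarith
  qed
qed

end
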